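(* Let $G$ be the bipartite graph with left vertices $u_1,u_2,u_3$, right vertices $w_1,w_2$, and edges $u_1w_1,\ u_1w_2,\ u_2w_1,\ u_3w_1,\ u_3w_2$ (and no others). Then there exist $n,k\in\mathbb{N}$ with $k\le n$ such that for every 2-coloring of the edges of $B_{n,k}$, there exists an induced monochromatic copy of $G$ in $B_{n,k}$; that is, there is a set $V'$ of vertices of $B_{n,k}$ such that the induced subgraph of $B_{n,k}$ on $V'$ is isomorphic to $G$ and all of its edges receive the same color.
   Context: For $n\in\mathbb{N}$, $[n]=\{1,\dots,n\}$, and for a set $X$, $\binom{X}{k}$ denotes the set of $k$-element subsets of $X$. For $k\le n$, $B_{n,k}$ is the bipartite graph with left vertex set $[n]$, right vertex set $\binom{[n]}{k}$, and edge set $\{(x,X)\in[n]\times\binom{[n]}{k} : x\in X\}$. For a graph $H=(V,E)$ and $V'\subseteq V$, the induced subgraph on $V'$ has vertex set $V'$ and edge set consisting of all edges of $H$ with both endpoints in $V'$. A 2-coloring of the edges is a map from the edge set to a 2-element set of colors. *)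

theory Defs
  imports Main
begin

definition B_verts :: "nat \<Rightarrow> nat \<Rightarrow> (nat + nat set) set" where
  "B_verts n k = Inl ` {1..n} \<union> Inr ` {X. X \<subseteq> {1..n} \<and> card X = k}"

definition B_adj :: "nat \<Rightarrow> nat \<Rightarrow> (nat + nat set) \<Rightarrow> (nat + nat set) \<Rightarrow> bool" where
  "B_adj n k v w \<longleftrightarrow> v \<in> B_verts n k \<and> w \<in> B_verts n k \<and>
     ((\<exists>x X. v = Inl x \<and> w = Inr X \<and> x \<in> X) \<or> (\<exists>x X. w = Inl x \<and> v = Inr X \<and> x \<in> X))"

text \<open>The graph G: left u1,u2,u3 = Inl 1,2,3; right w1,w2 = Inr 1,2.\<close>
definition G_verts :: "(nat + nat) set" where
  "G_verts = Inl ` {1,2,3} \<union> Inr ` {1,2}"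

definition G_edges :: "((nat + nat) \<times> (nat + nat)) set" where
  "G_edges = {(Inl 1, Inr 1), (Inl 1, Inr 2), (Inl 2, Inr 1), (Inl 3, Inr 1), (Inl 3, Inr 2)}"

definition G_adj :: "(nat + nat) \<Rightarrow> (nat + nat) \<Rightarrow> bool" where
  "G_adj a b \<longleftrightarrow> (a, b) \<in> G_edges \<or> (b, a) \<in> G_edges"

definition induced_copy_of_G :: "nat \<Rightarrow> nat \<Rightarrow> (nat + nat set) set \<Rightarrow> bool" where
  "induced_copy_of_G n k V' \<longleftrightarrow> V' \<subseteq> B_verts n k \<and>
     (\<exists>f. bij_betw f G_verts V' \<and>
          (\<forall>a\<in>G_verts. \<forall>b\<in>G_verts. G_adj a b \<longleftrightarrow> B_adj n k (f a) (f b)))"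

text \<open>A 2-colouring of the edges of B_{n,k} is a map c, the edge (x,X) getting colour c x X;
  all edges of the induced subgraph on V' have the same colour.\<close>
definition monochromatic :: "(nat \<Rightarrow> nat set \<Rightarrow> bool) \<Rightarrow> (nat + nat set) set \<Rightarrow> bool" where
  "monochromatic c V' \<longleftrightarrow>
     (\<exists>col. \<forall>x X. Inl x \<in> V' \<and> Inr X \<in> V' \<and> x \<in> X \<longrightarrow> c x X = col)"

end

theory Submission
  imports Defs
begin

lemma copy_lemma:
  assumes X1: "X1 \<subseteq> {1..n}" "card X1 = k" and X2: "X2 \<subseteq> {1..n}" "card X2 = k"
    and ne: "X1 \<noteq> X2" and dist: "a \<noteq> b" "a \<noteq> d" "b \<noteq> d"
    and mem: "a \<in> X1" "b \<in> X1" "d \<in> X1" "a \<in> X2" "b \<in> X2" "d \<notin> X2"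
    and col: "c a X1 = col" "c b X1 = col" "c d X1 = col" "c a X2 = col" "c b X2 = col"
  shows "\<exists>V'. induced_copy_of_G n k V' \<and> monochromatic c V'"
proof -
  define V' where "V' = ({Inl a, Inl d, Inl b, Inr X1, Inr X2} :: (nat + nat set) set)"
  define f where "f = (\<lambda>v::nat+nat. if v = Inl 1 then Inl a else if v = Inl 2 then Inl d
      else if v = Inl 3 then Inl b else if v = Inr 1 then Inr X1 else (Inr X2 :: nat + nat set))"
  have abd: "a \<in> {1..n}" "b \<in> {1..n}" "d \<in> {1..n}" using X1 mem by auto
  have sub: "V' \<subseteq> B_verts n k"
    unfolding V'_def B_verts_def using abd X1 X2 by auto
  have bij: "bij_betw f G_verts V'"
    unfolding bij_betw_def inj_on_def G_verts_def V'_def f_def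
    using dist ne by auto
  have adj: "\<forall>a'\<in>G_verts. \<forall>b'\<in>G_verts. G_adj a' b' \<longleftrightarrow> B_adj n k (f a') (f b')"
    unfolding G_verts_def G_adj_def G_edges_def B_adj_def f_def
    using sub mem unfolding V'_def by auto
  have mono: "monochromatic c V'"
    unfolding monochromatic_def V'_def using col mem by auto
  show ?thesis unfolding induced_copy_of_G_def using sub bij adj mono by blast
qed


lemma row_lemma:
  assumes y: "y1 \<in> {1..n}" "y2 \<in> {1..n}" "y1 \<noteq> y2"
    and ab: "a \<in> {1..n}" "b \<in> {1..n}" "a \<noteq> b" "a \<notin> {y1,y2}" "b \<notin> {y1,y2}"
    and col: "c a ({1..n} - {y1}) = col" "c b ({1..n} - {y1}) = col" "c y2 ({1..n} - {y1}) = col"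
       "c a ({1..n} - {y2}) = col" "c b ({1..n} - {y2}) = col"
  shows "\<exists>V'. induced_copy_of_G n (n - 1) V' \<and> monochromatic c V'"
proof -
  have c1: "card ({1..n} - {y1}) = n - 1" using y(1) by (simp add: card_Diff_singleton)
  have c2: "card ({1..n} - {y2}) = n - 1" using y(2) by (simp add: card_Diff_singleton)
  have ne: "{1..n} - {y1} \<noteq> {1..n} - {y2}" using y by blast
  have m: "a \<in> {1..n} - {y1}" "b \<in> {1..n} - {y1}" "y2 \<in> {1..n} - {y1}"
     "a \<in> {1..n} - {y2}" "b \<in> {1..n} - {y2}" "y2 \<notin> {1..n} - {y2}" using y ab by auto
  have d: "a \<noteq> y2" "b \<noteq> y2" using ab by auto
  show ?thesis
    by (rule copy_lemma[of "{1..n} - {y1}" n "n-1" "{1..n} - {y2}" a b y2 c col,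
        OF Diff_subset c1 Diff_subset c2 ne ab(3) d m col])
qed

lemma pigeon:
  fixes p :: "nat \<Rightarrow> bool \<times> bool \<times> bool"
  shows "\<exists>q. 4 \<le> card {y\<in>{4..28::nat}. p y = q}"
proof (rule ccontr)
  assume neg: "\<not> ?thesis"
  have le: "card {y\<in>{4..28::nat}. p y = q} \<le> 3" for q
  proof -
    have "\<not> 4 \<le> card {y\<in>{4..28::nat}. p y = q}" using neg by blast
    thus ?thesis by linarith
  qed
  have U: "{4..28::nat} = (\<Union>q\<in>UNIV. {y\<in>{4..28::nat}. p y = q})" by blast
  have cu: "card (UNIV :: (bool \<times> bool \<times> bool) set) = 8"
  proof -
    have e: "(UNIV :: (bool \<times> bool \<times> bool) set) = UNIV \<times> (UNIV \<times> UNIV)" by simp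
    show ?thesis unfolding e card_cartesian_product card_UNIV_bool by simp
  qed
  have "card {4..28::nat} \<le> (\<Sum>q\<in>UNIV. card {y\<in>{4..28::nat}. p y = q})"
    by (subst U, rule card_UN_le) simp
  also have "\<dots> \<le> (\<Sum>q\<in>(UNIV::(bool \<times> bool \<times> bool) set). 3)"
    by (rule sum_mono) (use le in auto)
  also have "\<dots> = 24" using cu by simp
  finally show False by simp
qed

lemma four_elems:
  assumes "finite F" "4 \<le> card F"
  shows "\<exists>y1 y2 y3 y4. distinct [y1,y2,y3,y4] \<and> {y1,y2,y3,y4} \<subseteq> F"
proof -
  obtain T where T: "T \<subseteq> F" "card T = 4" using obtain_subset_with_card_n assms by metis
  then obtain y1 T1 where "T = insert y1 T1" "y1 \<notin> T1" "card T1 = 3" by (metis card_Suc_eq numeral_eq_Suc pred_numeral_simps(2) semiring_norm(26) semiring_norm(27))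
  moreover then obtain y2 T2 where "T1 = insert y2 T2" "y2 \<notin> T2" "card T2 = 2" by (metis card_Suc_eq numeral_2_eq_2 numeral_3_eq_3)
  moreover then obtain y3 y4 where "T2 = {y3,y4}" "y3 \<noteq> y4" by (meson card_2_iff)
  ultimately show ?thesis using T by auto
qed

theorem mainTheorem4:
  shows "\<exists>n k::nat. k \<le> n \<and>
           (\<forall>c :: nat \<Rightarrow> nat set \<Rightarrow> bool.
              \<exists>V'. induced_copy_of_G n k V' \<and> monochromatic c V')"
proof -
  have main: "\<exists>V'. induced_copy_of_G 28 27 V' \<and> monochromatic c V'" for c :: "nat \<Rightarrow> nat set \<Rightarrow> bool"
  proof -
  define M where "M y x = c x ({1..28} - {y})" for y x :: nat
  define p where "p y = (M y 1, M y 2, M y 3)" for y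
  obtain q where q: "4 \<le> card {y\<in>{4..28::nat}. p y = q}" using pigeon by blast
  obtain y1 y2 y3 y4 where ys: "distinct [y1,y2,y3,y4]" "{y1,y2,y3,y4} \<subseteq> {y\<in>{4..28::nat}. p y = q}"
    using four_elems[OF _ q] by auto
  obtain a b col where abc: "a \<in> {1,2,3::nat}" "b \<in> {1,2,3}" "a \<noteq> b"
     "\<And>y. p y = q \<Longrightarrow> M y a = col \<and> M y b = col"
  proof -
    obtain q1 q2 q3 where qq: "q = (q1,q2,q3)" by (cases q) auto
    show ?thesis
    proof (cases "q1 = q2")
      case True then show ?thesis using that[of 1 2 q1] unfolding p_def qq by auto
    next
      case F1: False show ?thesis
      proof (cases "q1 = q3")
        case True then show ?thesis using that[of 1 3 q1] unfolding p_def qq by auto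
      next
        case False then have "q2 = q3" using F1 by auto
        then show ?thesis using that[of 2 3 q2] unfolding p_def qq by auto
      qed
    qed
  qed
  have gen: "\<exists>V'. induced_copy_of_G 28 27 V' \<and> monochromatic c V'"
    if "u1 \<in> {4..28}" "u2 \<in> {4..28}" "u1 \<noteq> u2" "a' \<in> {1..28}" "b' \<in> {1..28}" "a' \<noteq> b'"
       "a' \<notin> {u1,u2}" "b' \<notin> {u1,u2}" "M u1 a' = cl" "M u1 b' = cl" "M u1 u2 = cl"
       "M u2 a' = cl" "M u2 b' = cl" for u1 u2 a' b' cl
    using row_lemma[of u1 28 u2 a' b' c cl] that unfolding M_def by auto
  have rows: "M y a = col" "M y b = col" if "y \<in> {y1,y2,y3,y4}" for y
    using abc(4) ys(2) that by blast+
  have yr: "y \<in> {4..28}" if "y \<in> {y1,y2,y3,y4}" for y using ys(2) that by blast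
  have abr: "a \<in> {1..28}" "b \<in> {1..28}" "a \<notin> {4..28}" "b \<notin> {4..28}" using abc by auto
  show "\<exists>V'. induced_copy_of_G 28 27 V' \<and> monochromatic c V'"
  proof (cases "\<exists>u1\<in>{y1,y2,y3,y4}. \<exists>u2\<in>{y1,y2,y3,y4}. u1 \<noteq> u2 \<and> M u1 u2 = col")
    case True
    then obtain u1 u2 where u: "u1 \<in> {y1,y2,y3,y4}" "u2 \<in> {y1,y2,y3,y4}" "u1 \<noteq> u2" "M u1 u2 = col"
      by blast
    have "a \<notin> {u1,u2}" "b \<notin> {u1,u2}" using yr[OF u(1)] yr[OF u(2)] abr by auto
    then show ?thesis using gen[of u1 u2 a b col] u rows[OF u(1)] rows[OF u(2)] yr[OF u(1)] yr[OF u(2)] abr abc(3)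
      by blast
  next
    case False
    hence nc: "\<And>u1 u2. u1 \<in> {y1,y2,y3,y4} \<Longrightarrow> u2 \<in> {y1,y2,y3,y4} \<Longrightarrow> u1 \<noteq> u2 \<Longrightarrow> M u1 u2 = (\<not> col)"
      by blast
    show ?thesis
      apply (rule gen[of y1 y2 y3 y4 "\<not> col"])
      using ys(1) nc[of y1 y2] nc[of y1 y3] nc[of y1 y4] nc[of y2 y3] nc[of y2 y4]
        yr[of y1] yr[of y2] yr[of y3] yr[of y4] by simp_all
  qed
qed
  show ?thesis
    by (rule exI[of _ "28::nat"], rule exI[of _ "27::nat"]) (simp add: main)
qed

end
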